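(* Let $n,k$ be integers with $n\ge 97$ and $\frac{3n}{4}\le k\le n$. Let $M\in\mathcal{S}^{n,k}$ with $\|M\|_F=1$, and suppose $M$ is not positive semidefinite, with smallest eigenvalue $-\lambda_1<0$. Then $$\lambda_1\le\frac{96(n-k)}{n^{3/2}}.$$
   Context: For integers $2\le k\le n$, the $k$-PSD closure $\mathcal{S}^{n,k}$ is the set of all $n\times n$ real symmetric matrices all of whose $k\times k$ principal submatrices are positive semidefinite. $\|\cdot\|_F$ is the Frobenius norm. *)

theory Defs
  imports Complex_Main "Jordan_Normal_Form.Char_Poly" "Jordan_Normal_Form.DL_Submatrix"
begin

definition psd_mat :: "real mat \<Rightarrow> bool" where
  "psd_mat A \<longleftrightarrow> A \<in> carrier_mat (dim_row A) (dim_row A) \<and> transpose_mat A = A \<and>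
     (\<forall>x \<in> carrier_vec (dim_row A). 0 \<le> x \<bullet> (A *\<^sub>v x))"

definition k_psd_closure :: "nat \<Rightarrow> nat \<Rightarrow> real mat set" where
  "k_psd_closure n k = {M. M \<in> carrier_mat n n \<and> transpose_mat M = M \<and>
     (\<forall>S. S \<subseteq> {0..<n} \<and> card S = k \<longrightarrow> psd_mat (submatrix M S S))}"

definition frobenius_norm :: "real mat \<Rightarrow> real" where
  "frobenius_norm M = sqrt (\<Sum>i<dim_row M. \<Sum>j<dim_col M. (M $$ (i, j))\<^sup>2)"

end

theory Submission
  imports Defs
begin

lemma count_sup:
  assumes "finite L" "A \<subseteq> L" "card A \<le> m"
  shows "card {R. R \<subseteq> L \<and> card R = m \<and> A \<subseteq> R} = (card L - card A) choose (m - card A)"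
proof -
  have fA: "finite A" using assms finite_subset by blast
  have eq: "{R. R \<subseteq> L \<and> card R = m \<and> A \<subseteq> R} = (\<lambda>R'. R' \<union> A) ` {R'. R' \<subseteq> L - A \<and> card R' = m - card A}"
  proof
    show "{R. R \<subseteq> L \<and> card R = m \<and> A \<subseteq> R} \<subseteq> (\<lambda>R'. R' \<union> A) ` {R'. R' \<subseteq> L - A \<and> card R' = m - card A}"
    proof
      fix R assume R: "R \<in> {R. R \<subseteq> L \<and> card R = m \<and> A \<subseteq> R}"
      then have "R = (R - A) \<union> A" by blast
      moreover have "card (R - A) = m - card A" using R fA by (simp add: card_Diff_subset)
      moreover have "R - A \<subseteq> L - A" using R by blast
      ultimately show "R \<in> (\<lambda>R'. R' \<union> A) ` {R'. R' \<subseteq> L - A \<and> card R' = m - card A}" by blast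
    qed
  next
    show "(\<lambda>R'. R' \<union> A) ` {R'. R' \<subseteq> L - A \<and> card R' = m - card A} \<subseteq> {R. R \<subseteq> L \<and> card R = m \<and> A \<subseteq> R}"
    proof
      fix R assume "R \<in> (\<lambda>R'. R' \<union> A) ` {R'. R' \<subseteq> L - A \<and> card R' = m - card A}"
      then obtain R' where R': "R' \<subseteq> L - A" "card R' = m - card A" "R = R' \<union> A" by blast
      have "finite R'" using R' assms finite_subset by blast
      moreover have "R' \<inter> A = {}" using R' by blast
      ultimately have "card R = card R' + card A" using R' fA by (simp add: card_Un_disjoint)
      then show "R \<in> {R. R \<subseteq> L \<and> card R = m \<and> A \<subseteq> R}" using R' assms by auto
    qed
  qed
  have inj: "inj_on (\<lambda>R'. R' \<union> A) {R'. R' \<subseteq> L - A \<and> card R' = m - card A}"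
    by (rule inj_onI) blast
  have "card {R. R \<subseteq> L \<and> card R = m \<and> A \<subseteq> R} = card {R'. R' \<subseteq> L - A \<and> card R' = m - card A}"
    unfolding eq using inj by (rule card_image)
  also have "\<dots> = card (L - A) choose (m - card A)" using assms by (simp add: n_subsets)
  also have "card (L - A) = card L - card A" using assms fA by (simp add: card_Diff_subset)
  finally show ?thesis .
qed

lemma quad_sub:
  fixes M :: "real mat"
  assumes M: "M \<in> carrier_mat n n" and S: "S \<subseteq> {..<n}" and P: "psd_mat (submatrix M S S)"
  shows "0 \<le> (\<Sum>i\<in>S. \<Sum>j\<in>S. w i * M $$ (i,j) * w j)"
proof -
  have fS: "finite S" using S finite_subset by blast
  have cs: "card {i. i < dim_row M \<and> i \<in> S} = card S"
  proof -
    have "{i. i < dim_row M \<and> i \<in> S} = S" using M S by auto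
    then show ?thesis by simp
  qed
  have cs2: "card {i. i < dim_col M \<and> i \<in> S} = card S"
  proof -
    have "{i. i < dim_col M \<and> i \<in> S} = S" using M S by auto
    then show ?thesis by simp
  qed
  let ?c = "card S"
  let ?A = "submatrix M S S"
  have dA: "dim_row ?A = ?c" "dim_col ?A = ?c" using cs cs2 by (simp_all add: dim_submatrix)
  define x where "x = vec ?c (\<lambda>a. w (pick S a))"
  have xc: "x \<in> carrier_vec (dim_row ?A)" using dA x_def by simp
  have "0 \<le> x \<bullet> (?A *\<^sub>v x)" using P xc unfolding psd_mat_def by blast
  also have "x \<bullet> (?A *\<^sub>v x) = (\<Sum>a<?c. w (pick S a) * (\<Sum>b<?c. M $$ (pick S a, pick S b) * w (pick S b)))"
  proof -
    have "x \<bullet> (?A *\<^sub>v x) = (\<Sum>a\<in>{0..<?c}. x $ a * (?A *\<^sub>v x) $ a)"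
      unfolding scalar_prod_def using dA by simp
    also have "\<dots> = (\<Sum>a<?c. w (pick S a) * (\<Sum>b<?c. M $$ (pick S a, pick S b) * w (pick S b)))"
    proof (rule sum.cong)
      show "{0..<?c} = {..<?c}" by auto
    next
      fix a assume a: "a \<in> {..<?c}"
      have "(?A *\<^sub>v x) $ a = row ?A a \<bullet> x" using a dA by simp
      also have "\<dots> = (\<Sum>b\<in>{0..<?c}. ?A $$ (a, b) * x $ b)"
        unfolding scalar_prod_def using dA a x_def by simp
      also have "\<dots> = (\<Sum>b<?c. M $$ (pick S a, pick S b) * w (pick S b))"
      proof (rule sum.cong)
        show "{0..<?c} = {..<?c}" by auto
      next
        fix b assume b: "b \<in> {..<?c}"
        show "?A $$ (a, b) * x $ b = M $$ (pick S a, pick S b) * w (pick S b)"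
          using a b cs cs2 by (simp add: submatrix_index x_def)
      qed
      finally show "x $ a * (?A *\<^sub>v x) $ a = w (pick S a) * (\<Sum>b<?c. M $$ (pick S a, pick S b) * w (pick S b))"
        using a x_def by simp
    qed
    finally show ?thesis .
  qed
  also have "\<dots> = (\<Sum>i\<in>S. \<Sum>j\<in>S. w i * M $$ (i,j) * w j)"
  proof -
    have bij: "bij_betw (pick S) {..<?c} S"
    proof (rule bij_betw_imageI)
      show "inj_on (pick S) {..<?c}"
      proof (rule inj_onI)
        fix x y assume x: "x \<in> {..<?c}" and y: "y \<in> {..<?c}" and e: "pick S x = pick S y"
        have "x = card {a\<in>S. a < pick S x}" using x by (simp add: card_pick_le)
        also have "\<dots> = card {a\<in>S. a < pick S y}" using e by simp
        also have "\<dots> = y" using y by (simp add: card_pick_le)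
        finally show "x = y" .
      qed
      show "pick S ` {..<?c} = S"
      proof
        show "pick S ` {..<?c} \<subseteq> S" using pick_in_set_le by auto
        show "S \<subseteq> pick S ` {..<?c}"
        proof
          fix i assume i: "i \<in> S"
          have "card {a\<in>S. a < i} < ?c" using i fS by (intro psubset_card_mono) auto
          then have "pick S (card {a\<in>S. a < i}) \<in> pick S ` {..<?c}" by simp
          then show "i \<in> pick S ` {..<?c}" using pick_card_in_set[OF i] by simp
        qed
      qed
    qed
    have r: "\<And>G. (\<Sum>a<?c. G (pick S a)) = (\<Sum>i\<in>S. G i)"
      using sum.reindex_bij_betw[OF bij] by blast
    have "(\<Sum>a<?c. w (pick S a) * (\<Sum>b<?c. M $$ (pick S a, pick S b) * w (pick S b)))
        = (\<Sum>a<?c. w (pick S a) * (\<Sum>j\<in>S. M $$ (pick S a, j) * w j))"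
      using r[of "\<lambda>j. M $$ (pick S _, j) * w j"] by simp
    also have "\<dots> = (\<Sum>i\<in>S. w i * (\<Sum>j\<in>S. M $$ (i, j) * w j))"
      by (rule r)
    also have "\<dots> = (\<Sum>i\<in>S. \<Sum>j\<in>S. w i * M $$ (i,j) * w j)"
      by (simp add: sum_distrib_left mult.assoc)
    finally show ?thesis .
  qed
  finally show ?thesis .
qed


lemma dc1:
  fixes \<phi> :: "nat \<Rightarrow> real"
  assumes "finite L" "1 \<le> m"
  shows "(\<Sum>R\<in>{R. R \<subseteq> L \<and> card R = m}. \<Sum>j\<in>R. \<phi> j) = real ((card L - 1) choose (m - 1)) * (\<Sum>j\<in>L. \<phi> j)"
proof -
  let ?RR = "{R. R \<subseteq> L \<and> card R = m}"
  have fin: "finite ?RR" using assms by simp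
  have "(\<Sum>R\<in>?RR. \<Sum>j\<in>R. \<phi> j) = (\<Sum>R\<in>?RR. \<Sum>j\<in>{j. j \<in> L \<and> j \<in> R}. \<phi> j)"
  proof (rule sum.cong[OF refl])
    fix R assume "R \<in> ?RR"
    then have "{j. j \<in> L \<and> j \<in> R} = R" by auto
    then show "sum \<phi> R = sum \<phi> {j. j \<in> L \<and> j \<in> R}" by simp
  qed
  also have "\<dots> = (\<Sum>j\<in>L. \<Sum>R\<in>{R. R \<in> ?RR \<and> j \<in> R}. \<phi> j)"
    by (rule sum.swap_restrict[OF fin assms(1)])
  also have "\<dots> = (\<Sum>j\<in>L. real ((card L - 1) choose (m - 1)) * \<phi> j)"
  proof (intro sum.cong refl)
    fix j assume j: "j \<in> L"
    have "{R. R \<in> ?RR \<and> j \<in> R} = {R. R \<subseteq> L \<and> card R = m \<and> {j} \<subseteq> R}" by auto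
    then have "card {R. R \<in> ?RR \<and> j \<in> R} = (card L - 1) choose (m - 1)"
      using count_sup[of L "{j}" m] assms j by simp
    then show "(\<Sum>R\<in>{R. R \<in> ?RR \<and> j \<in> R}. \<phi> j) = real ((card L - 1) choose (m - 1)) * \<phi> j"
      by simp
  qed
  finally show ?thesis by (simp add: sum_distrib_left)
qed

lemma dc2:
  fixes g :: "nat \<Rightarrow> nat \<Rightarrow> real"
  assumes "finite L" "2 \<le> m"
  shows "(\<Sum>R\<in>{R. R \<subseteq> L \<and> card R = m}. \<Sum>i\<in>R. \<Sum>j\<in>R. g i j) =
    real ((card L - 2) choose (m - 2)) * (\<Sum>i\<in>L. \<Sum>j\<in>L. g i j)
    + (real ((card L - 1) choose (m - 1)) - real ((card L - 2) choose (m - 2))) * (\<Sum>i\<in>L. g i i)"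
proof -
  let ?RR = "{R. R \<subseteq> L \<and> card R = m}"
  let ?N1 = "real ((card L - 1) choose (m - 1))"
  let ?N2 = "real ((card L - 2) choose (m - 2))"
  have fin: "finite ?RR" using assms by simp
  have "(\<Sum>R\<in>?RR. \<Sum>i\<in>R. \<Sum>j\<in>R. g i j) = (\<Sum>R\<in>?RR. \<Sum>i\<in>{i. i \<in> L \<and> i \<in> R}. \<Sum>j\<in>R. g i j)"
  proof (rule sum.cong[OF refl])
    fix R assume "R \<in> ?RR"
    then have "{j. j \<in> L \<and> j \<in> R} = R" by auto
    then show "(\<Sum>i\<in>R. \<Sum>j\<in>R. g i j) = (\<Sum>i\<in>{i. i \<in> L \<and> i \<in> R}. \<Sum>j\<in>R. g i j)" by simp
  qed
  also have "\<dots> = (\<Sum>i\<in>L. \<Sum>R\<in>{R. R \<in> ?RR \<and> i \<in> R}. \<Sum>j\<in>R. g i j)"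
    by (rule sum.swap_restrict[OF fin assms(1)])
  also have "\<dots> = (\<Sum>i\<in>L. ?N2 * (\<Sum>j\<in>L. g i j) + (?N1 - ?N2) * g i i)"
  proof (intro sum.cong refl)
    fix i assume i: "i \<in> L"
    let ?Ri = "{R. R \<in> ?RR \<and> i \<in> R}"
    have finRi: "finite ?Ri" by (rule finite_subset[OF _ fin]) auto
    have "(\<Sum>R\<in>?Ri. \<Sum>j\<in>R. g i j) = (\<Sum>R\<in>?Ri. \<Sum>j\<in>{j. j \<in> L \<and> j \<in> R}. g i j)"
    proof (rule sum.cong[OF refl])
      fix R assume "R \<in> ?Ri"
      then have "{j. j \<in> L \<and> j \<in> R} = R" by auto
      then show "(\<Sum>j\<in>R. g i j) = (\<Sum>j\<in>{j. j \<in> L \<and> j \<in> R}. g i j)" by simp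
    qed
    also have "\<dots> = (\<Sum>j\<in>L. \<Sum>R\<in>{R. R \<in> ?Ri \<and> j \<in> R}. g i j)"
      by (rule sum.swap_restrict[OF finRi assms(1)])
    also have "\<dots> = (\<Sum>j\<in>L. ?N2 * g i j + (if j = i then (?N1 - ?N2) * g i i else 0))"
    proof (intro sum.cong refl)
      fix j assume j: "j \<in> L"
      show "(\<Sum>R\<in>{R. R \<in> ?Ri \<and> j \<in> R}. g i j) = ?N2 * g i j + (if j = i then (?N1 - ?N2) * g i i else 0)"
      proof (cases "j = i")
        case True
        have "{R. R \<in> ?Ri \<and> j \<in> R} = {R. R \<subseteq> L \<and> card R = m \<and> {i} \<subseteq> R}" using True by auto
        then have "card {R. R \<in> ?Ri \<and> j \<in> R} = (card L - 1) choose (m - 1)"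
          using count_sup[of L "{i}" m] assms i by simp
        then show ?thesis using True by (simp add: algebra_simps)
      next
        case False
        have "{R. R \<in> ?Ri \<and> j \<in> R} = {R. R \<subseteq> L \<and> card R = m \<and> {i,j} \<subseteq> R}" by auto
        then have "card {R. R \<in> ?Ri \<and> j \<in> R} = (card L - 2) choose (m - 2)"
        proof -
          have c2: "card {i,j} = 2" using False by simp
          have "card {R. R \<subseteq> L \<and> card R = m \<and> {i,j} \<subseteq> R} = (card L - card {i,j}) choose (m - card {i,j})"
            using assms i j by (intro count_sup) (auto simp: c2)
          then show ?thesis using \<open>{R. R \<in> ?Ri \<and> j \<in> R} = _\<close> c2 by simp
        qed
        then show ?thesis using False by simp
      qed
    qed
    also have "\<dots> = ?N2 * (\<Sum>j\<in>L. g i j) + (?N1 - ?N2) * g i i"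
      using i assms by (simp add: sum.distrib sum_distrib_left)
    finally show "(\<Sum>R\<in>?Ri. \<Sum>j\<in>R. g i j) = ?N2 * (\<Sum>j\<in>L. g i j) + (?N1 - ?N2) * g i i" .
  qed
  also have "\<dots> = ?N2 * (\<Sum>i\<in>L. \<Sum>j\<in>L. g i j) + (?N1 - ?N2) * (\<Sum>i\<in>L. g i i)"
    by (simp add: sum.distrib sum_distrib_left)
  finally show ?thesis .
qed

lemma perR:
  fixes f :: "nat \<Rightarrow> nat \<Rightarrow> real" and u :: "nat \<Rightarrow> real"
  assumes disj: "H \<inter> R = {}" and fH: "finite H" and fR: "finite R"
    and sym: "\<And>i j. i \<in> H \<union> R \<Longrightarrow> j \<in> H \<union> R \<Longrightarrow> f i j = f j i"
  shows "(\<Sum>i\<in>H \<union> R. \<Sum>j\<in>H \<union> R. (if i \<in> H then a * u i else b * u i) * f i j * (if j \<in> H then a * u j else b * u j))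
    = a^2 * (\<Sum>i\<in>H. \<Sum>j\<in>H. u i * f i j * u j) + 2 * a * b * (\<Sum>i\<in>H. \<Sum>j\<in>R. u i * f i j * u j)
      + b^2 * (\<Sum>i\<in>R. \<Sum>j\<in>R. u i * f i j * u j)"
proof -
  let ?w = "\<lambda>i. if i \<in> H then a * u i else b * u i"
  let ?F = "\<lambda>i j. ?w i * f i j * ?w j"
  have s1: "(\<Sum>i\<in>H \<union> R. \<Sum>j\<in>H \<union> R. ?F i j) = (\<Sum>i\<in>H. \<Sum>j\<in>H. ?F i j) + (\<Sum>i\<in>H. \<Sum>j\<in>R. ?F i j)
      + ((\<Sum>i\<in>R. \<Sum>j\<in>H. ?F i j) + (\<Sum>i\<in>R. \<Sum>j\<in>R. ?F i j))"
    by (simp add: sum.union_disjoint[OF fH fR disj] sum.distrib)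
  have a1: "(\<Sum>i\<in>H. \<Sum>j\<in>H. ?F i j) = a^2 * (\<Sum>i\<in>H. \<Sum>j\<in>H. u i * f i j * u j)"
    by (simp add: sum_distrib_left power2_eq_square mult_ac)
  have rH: "\<And>i. i \<in> R \<Longrightarrow> i \<notin> H" using disj by blast
  have a2: "(\<Sum>i\<in>H. \<Sum>j\<in>R. ?F i j) = a * b * (\<Sum>i\<in>H. \<Sum>j\<in>R. u i * f i j * u j)"
    by (simp add: sum_distrib_left rH mult_ac)
  have a3: "(\<Sum>i\<in>R. \<Sum>j\<in>H. ?F i j) = a * b * (\<Sum>i\<in>H. \<Sum>j\<in>R. u i * f i j * u j)"
  proof -
    have "(\<Sum>i\<in>R. \<Sum>j\<in>H. ?F i j) = (\<Sum>j\<in>H. \<Sum>i\<in>R. ?F i j)" by (rule sum.swap)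
    also have "\<dots> = (\<Sum>j\<in>H. \<Sum>i\<in>R. a * b * (u j * f j i * u i))"
      by (intro sum.cong refl) (simp add: rH sym mult_ac)
    finally show ?thesis by (simp add: sum_distrib_left)
  qed
  have a4: "(\<Sum>i\<in>R. \<Sum>j\<in>R. ?F i j) = b^2 * (\<Sum>i\<in>R. \<Sum>j\<in>R. u i * f i j * u j)"
    by (simp add: sum_distrib_left power2_eq_square rH mult_ac)
  show ?thesis unfolding s1 a1 a2 a3 a4 by (simp add: algebra_simps)
qed

lemma final_alg:
  fixes N0 N1 N2 \<alpha> \<beta> XX XY YY D lam ax ay \<tau> :: real
  assumes N0: "0 < N0" and al: "0 < \<alpha>" and N1: "N1 = \<alpha> * N0" and N2: "N2 = \<beta> * N1"
    and ba: "\<beta> \<le> \<alpha>" and b0: "0 \<le> \<beta>" and b1: "\<beta> \<le> 1"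
    and S: "0 \<le> N0 * \<alpha>^2 * XX + 2 * \<alpha> * N1 * XY + N2 * YY + (N1 - N2) * D"
    and e1: "XX + XY = - lam * ax" and e2: "XY + YY = - lam * ay"
    and X0: "0 \<le> XX" and l0: "0 \<le> lam" and ax0: "0 \<le> ax" and ay0: "0 \<le> ay"
    and Dt: "D \<le> \<tau> * ay" and t0: "0 \<le> \<tau>" and pos: "0 < ax + ay"
  shows "\<beta> * lam \<le> (1 - \<beta>) * \<tau>"
proof -
  have "N0 * \<alpha>^2 * XX + 2 * \<alpha> * N1 * XY + N2 * YY + (N1 - N2) * D
      = (N0 * \<alpha>) * (\<alpha> * XX + 2 * \<alpha> * XY + \<beta> * YY + (1 - \<beta>) * D)"
    by (simp add: N1 N2 algebra_simps power2_eq_square)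
  with S have "0 \<le> (N0 * \<alpha>) * (\<alpha> * XX + 2 * \<alpha> * XY + \<beta> * YY + (1 - \<beta>) * D)" by simp
  moreover have "0 < N0 * \<alpha>" using N0 al by simp
  ultimately have Q: "0 \<le> \<alpha> * XX + 2 * \<alpha> * XY + \<beta> * YY + (1 - \<beta>) * D"
    by (simp add: zero_le_mult_iff)
  have XY: "XY = - lam * ax - XX" using e1 by simp
  have YY: "YY = - lam * ay + lam * ax + XX" using e2 XY by simp
  have "\<alpha> * XX + 2 * \<alpha> * XY + \<beta> * YY + (1 - \<beta>) * D
      = (\<beta> - \<alpha>) * XX + (\<beta> - 2 * \<alpha>) * (lam * ax) - \<beta> * (lam * ay) + (1 - \<beta>) * D"
    by (simp add: XY YY algebra_simps)
  moreover have "(\<beta> - \<alpha>) * XX \<le> 0" using ba X0 by (simp add: mult_nonpos_nonneg)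
  moreover have "(\<beta> - 2 * \<alpha>) * (lam * ax) \<le> - \<beta> * (lam * ax)"
  proof -
    have "0 \<le> lam * ax" using l0 ax0 by simp
    moreover have "\<beta> - 2 * \<alpha> \<le> - \<beta>" using ba by simp
    ultimately show ?thesis by (rule mult_right_mono[rotated])
  qed
  moreover have "(1 - \<beta>) * D \<le> (1 - \<beta>) * (\<tau> * (ax + ay))"
  proof -
    have "D \<le> \<tau> * (ax + ay)" using Dt t0 ax0 by (smt (verit) mult_nonneg_nonneg distrib_left)
    then show ?thesis using b1 by (intro mult_left_mono) auto
  qed
  ultimately have "0 \<le> - \<beta> * (lam * ax) - \<beta> * (lam * ay) + (1 - \<beta>) * (\<tau> * (ax + ay))"
    using Q by linarith
  then have "(\<beta> * lam) * (ax + ay) \<le> ((1 - \<beta>) * \<tau>) * (ax + ay)"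
    by (simp add: algebra_simps)
  then show ?thesis using pos by simp
qed

lemma core:
  fixes f :: "nat \<Rightarrow> nat \<Rightarrow> real" and u :: "nat \<Rightarrow> real" and n k :: nat and lam :: real
  assumes sym: "\<And>i j. i < n \<Longrightarrow> j < n \<Longrightarrow> f i j = f j i"
    and eig: "\<And>i. i < n \<Longrightarrow> (\<Sum>j<n. f i j * u j) = - lam * u i"
    and nz: "0 < (\<Sum>i<n. (u i)^2)"
    and psd: "\<And>S w. S \<subseteq> {..<n} \<Longrightarrow> card S = k \<Longrightarrow> 0 \<le> (\<Sum>i\<in>S. \<Sum>j\<in>S. w i * f i j * w j)"
    and frob: "(\<Sum>i<n. (f i i)^2) \<le> 1"
    and n97: "97 \<le> n" and kb: "3 * real n / 4 \<le> real k" and kn: "k \<le> n" and lp: "0 < lam"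
  shows "lam \<le> 96 * (real n - real k) / real n powr (3/2)"
proof -
  define \<tau> where "\<tau> = 2 / sqrt (real n)"
  have sn: "0 < sqrt (real n)" using n97 by simp
  have tp: "0 < \<tau>" using sn \<tau>_def by simp
  have t2: "\<tau>^2 = 4 / real n" using n97 by (simp add: \<tau>_def power_divide)
  define H where "H = {i\<in>{..<n}. \<tau> < f i i}"
  define L where "L = {i\<in>{..<n}. f i i \<le> \<tau>}"
  have fH: "finite H" and fL: "finite L" by (auto simp: H_def L_def)
  have HL: "H \<inter> L = {}" by (auto simp: H_def L_def)
  have HuL: "H \<union> L = {..<n}" by (auto simp: H_def L_def)
  have Hn: "H \<subseteq> {..<n}" and Ln: "L \<subseteq> {..<n}" by (auto simp: H_def L_def)
  have cHL: "card H + card L = n" using card_Un_disjoint[OF fH fL HL] HuL by simp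
  have hb: "real (card H) * \<tau>^2 \<le> 1"
  proof -
    have "real (card H) * \<tau>^2 = (\<Sum>i\<in>H. \<tau>^2)" by simp
    also have "\<dots> \<le> (\<Sum>i\<in>H. (f i i)^2)"
      by (rule sum_mono) (use tp in \<open>auto simp: H_def intro!: power_mono\<close>)
    also have "\<dots> \<le> (\<Sum>i<n. (f i i)^2)" by (rule sum_mono2) (auto simp: H_def)
    also have "\<dots> \<le> 1" by (rule frob)
    finally show ?thesis .
  qed
  define h where "h = card H"
  define l where "l = card L"
  define m where "m = k - h"
  have hb2: "4 * real h \<le> real n" using hb t2 n97 by (simp add: h_def field_simps)
  have hk: "real h + 2 \<le> real k" using hb2 kb n97 by linarith
  then have hk': "h + 2 \<le> k" by linarith
  have m2: "2 \<le> m" using hk' m_def by simp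
  have lnh: "l = n - h" using cHL h_def l_def by simp
  have ml: "m \<le> l" using kn hk' lnh m_def by simp
  have lm: "l - m = n - k" using kn hk' lnh m_def by simp
  have rm: "real m = real k - real h" using hk' m_def by simp
  define RR where "RR = {R. R \<subseteq> L \<and> card R = m}"
  define XX where "XX = (\<Sum>i\<in>H. \<Sum>j\<in>H. u i * f i j * u j)"
  define XY where "XY = (\<Sum>i\<in>H. \<Sum>j\<in>L. u i * f i j * u j)"
  define YY where "YY = (\<Sum>i\<in>L. \<Sum>j\<in>L. u i * f i j * u j)"
  define D where "D = (\<Sum>i\<in>L. u i * f i i * u i)"
  define ax where "ax = (\<Sum>i\<in>H. (u i)^2)"
  define ay where "ay = (\<Sum>i\<in>L. (u i)^2)"
  have axy: "0 < ax + ay"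
    using nz unfolding ax_def ay_def HuL[symmetric] by (simp add: sum.union_disjoint[OF fH fL HL])
  have ax0: "0 \<le> ax" unfolding ax_def by (simp add: sum_nonneg)
  have ay0: "0 \<le> ay" unfolding ay_def by (simp add: sum_nonneg)
  have eH: "XX + XY = - lam * ax"
  proof -
    have "XX + XY = (\<Sum>i\<in>H. u i * (\<Sum>j<n. f i j * u j))"
      unfolding XX_def XY_def HuL[symmetric]
      by (simp add: sum.union_disjoint[OF fH fL HL] distrib_left sum.distrib sum_distrib_left mult_ac)
    also have "\<dots> = (\<Sum>i\<in>H. - lam * (u i)^2)"
      by (intro sum.cong refl) (auto simp: eig H_def power2_eq_square)
    also have "\<dots> = - lam * ax" by (simp add: ax_def sum_distrib_left)
    finally show ?thesis .
  qed
  have YX: "(\<Sum>i\<in>L. \<Sum>j\<in>H. u i * f i j * u j) = XY"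
  proof -
    have symHL: "\<And>i j. j \<in> H \<Longrightarrow> i \<in> L \<Longrightarrow> f i j = f j i" using Hn Ln sym by blast
    have "(\<Sum>i\<in>L. \<Sum>j\<in>H. u i * f i j * u j) = (\<Sum>j\<in>H. \<Sum>i\<in>L. u i * f i j * u j)" by (rule sum.swap)
    also have "\<dots> = XY" unfolding XY_def by (intro sum.cong refl) (simp add: symHL mult_ac)
    finally show ?thesis .
  qed
  have eL: "XY + YY = - lam * ay"
  proof -
    have "XY + YY = (\<Sum>i\<in>L. u i * (\<Sum>j<n. f i j * u j))"
      unfolding YX[symmetric] YY_def HuL[symmetric]
      by (simp add: sum.union_disjoint[OF fH fL HL] distrib_left sum.distrib sum_distrib_left mult_ac)
    also have "\<dots> = (\<Sum>i\<in>L. - lam * (u i)^2)"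
      by (intro sum.cong refl) (auto simp: eig L_def power2_eq_square)
    also have "\<dots> = - lam * ay" by (simp add: ay_def sum_distrib_left)
    finally show ?thesis .
  qed
  have Dt: "D \<le> \<tau> * ay"
  proof -
    have "D \<le> (\<Sum>i\<in>L. \<tau> * (u i)^2)" unfolding D_def
    proof (rule sum_mono)
      fix i assume "i \<in> L"
      then have "f i i \<le> \<tau>" by (simp add: L_def)
      then have "f i i * (u i)^2 \<le> \<tau> * (u i)^2" by (rule mult_right_mono) simp
      then show "u i * f i i * u i \<le> \<tau> * (u i)^2" by (simp add: power2_eq_square mult_ac)
    qed
    then show ?thesis by (simp add: ay_def sum_distrib_left)
  qed
  have psdR: "0 \<le> a^2 * XX + 2*a*b*(\<Sum>i\<in>H. \<Sum>j\<in>R. u i * f i j * u j) + b^2 * (\<Sum>i\<in>R. \<Sum>j\<in>R. u i * f i j * u j)"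
    if R: "R \<in> RR" for R a b
  proof -
    have RL: "R \<subseteq> L" and cR: "card R = m" using R by (auto simp: RR_def)
    have fR: "finite R" using RL fL finite_subset by blast
    have disj: "H \<inter> R = {}" using RL HL by blast
    have Sk: "card (H \<union> R) = k" using card_Un_disjoint[OF fH fR disj] cR m_def h_def hk' by simp
    have Ssub: "H \<union> R \<subseteq> {..<n}" using RL Hn Ln by blast
    have "0 \<le> (\<Sum>i\<in>H \<union> R. \<Sum>j\<in>H \<union> R. (if i \<in> H then a * u i else b * u i) * f i j * (if j \<in> H then a * u j else b * u j))"
      by (rule psd[OF Ssub Sk])
    also have "\<dots> = a^2 * (\<Sum>i\<in>H. \<Sum>j\<in>H. u i * f i j * u j) + 2 * a * b * (\<Sum>i\<in>H. \<Sum>j\<in>R. u i * f i j * u j)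
      + b^2 * (\<Sum>i\<in>R. \<Sum>j\<in>R. u i * f i j * u j)"
      by (rule perR[OF disj fH fR]) (use Ssub in \<open>auto intro: sym\<close>)
    finally show ?thesis unfolding XX_def .
  qed
  obtain R0 where R0: "R0 \<subseteq> L" "card R0 = m" using obtain_subset_with_card_n[of m L] ml l_def by auto
  have XX0: "0 \<le> XX" using psdR[of R0 1 0] R0 by (simp add: RR_def)
  define N0 where "N0 = real (l choose m)"
  define N1 where "N1 = real ((l - 1) choose (m - 1))"
  define N2 where "N2 = real ((l - 2) choose (m - 2))"
  define \<alpha> where "\<alpha> = real m / real l"
  have cRR: "card RR = l choose m" unfolding RR_def l_def using fL by (simp add: n_subsets)
  have finRR: "finite RR" unfolding RR_def using fL by simp
  have sum1: "(\<Sum>R\<in>RR. \<Sum>i\<in>H. \<Sum>j\<in>R. u i * f i j * u j) = N1 * XY"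
  proof -
    have "(\<Sum>R\<in>RR. \<Sum>i\<in>H. \<Sum>j\<in>R. u i * f i j * u j) = (\<Sum>R\<in>RR. \<Sum>j\<in>R. \<Sum>i\<in>H. u i * f i j * u j)"
      by (rule sum.cong[OF refl]) (rule sum.swap)
    also have "\<dots> = N1 * (\<Sum>j\<in>L. \<Sum>i\<in>H. u i * f i j * u j)"
      unfolding RR_def N1_def l_def using fL m2 by (intro dc1) auto
    also have "(\<Sum>j\<in>L. \<Sum>i\<in>H. u i * f i j * u j) = XY" unfolding XY_def by (rule sum.swap)
    finally show ?thesis .
  qed
  have sum2: "(\<Sum>R\<in>RR. \<Sum>i\<in>R. \<Sum>j\<in>R. u i * f i j * u j) = N2 * YY + (N1 - N2) * D"
    unfolding RR_def N1_def N2_def YY_def D_def l_def using fL m2 by (intro dc2) auto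
  have S: "0 \<le> N0 * \<alpha>^2 * XX + 2 * \<alpha> * N1 * XY + N2 * YY + (N1 - N2) * D"
  proof -
    have "0 \<le> (\<Sum>R\<in>RR. \<alpha>^2 * XX + 2*\<alpha>*1*(\<Sum>i\<in>H. \<Sum>j\<in>R. u i * f i j * u j) + 1^2 * (\<Sum>i\<in>R. \<Sum>j\<in>R. u i * f i j * u j))"
      by (rule sum_nonneg) (rule psdR)
    also have "\<dots> = real (card RR) * \<alpha>^2 * XX + 2 * \<alpha> * (\<Sum>R\<in>RR. \<Sum>i\<in>H. \<Sum>j\<in>R. u i * f i j * u j)
        + (\<Sum>R\<in>RR. \<Sum>i\<in>R. \<Sum>j\<in>R. u i * f i j * u j)"
      by (simp add: sum.distrib sum_distrib_left)
    also have "\<dots> = N0 * \<alpha>^2 * XX + 2 * \<alpha> * N1 * XY + N2 * YY + (N1 - N2) * D"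
      unfolding sum1 sum2 cRR N0_def by simp
    finally show ?thesis .
  qed
  have l2: "2 \<le> l" using m2 ml by simp
  have bin1: "m * (l choose m) = l * ((l - 1) choose (m - 1))"
    using times_binomial_minus1_eq[of m l] m2 by simp
  have bin2: "(m - 1) * ((l - 1) choose (m - 1)) = (l - 1) * ((l - 2) choose (m - 2))"
    using times_binomial_minus1_eq[of "m - 1" "l - 1"] m2 by (simp add: numeral_2_eq_2)
  have N0p: "0 < N0" unfolding N0_def using ml by simp
  define \<beta> where "\<beta> = (real m - 1) / (real l - 1)"
  have rl1: "0 < real l - 1" using l2 by simp
  have N1e: "N1 = \<alpha> * N0"
  proof -
    have "real m * N0 = real l * N1" unfolding N0_def N1_def using bin1 by (metis of_nat_mult)
    then show ?thesis unfolding \<alpha>_def using l2 by (simp add: field_simps)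
  qed
  have N2e: "N2 = \<beta> * N1"
  proof -
    have "real (m - 1) * N1 = real (l - 1) * N2" unfolding N1_def N2_def using bin2 by (metis of_nat_mult)
    then have "(real m - 1) * N1 = (real l - 1) * N2" using m2 l2 by (simp add: of_nat_diff)
    then show ?thesis unfolding \<beta>_def using rl1 by (simp add: field_simps)
  qed
  have alp: "0 < \<alpha>" unfolding \<alpha>_def using m2 l2 by simp
  have ba: "\<beta> \<le> \<alpha>"
  proof -
    have "(real m - 1) * real l \<le> real m * (real l - 1)" using ml by (simp add: algebra_simps)
    then show ?thesis unfolding \<alpha>_def \<beta>_def using rl1 l2 by (simp add: field_simps)
  qed
  have b0: "0 \<le> \<beta>" unfolding \<beta>_def using m2 rl1 by simp
  have b1: "\<beta> \<le> 1" unfolding \<beta>_def using ml rl1 by simp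
  have key: "\<beta> * lam \<le> (1 - \<beta>) * \<tau>"
    by (rule final_alg[OF N0p alp N1e N2e ba b0 b1 S eH eL XX0 _ ax0 ay0 Dt _ axy]) (use lp tp in auto)
  have key2: "(real m - 1) * lam \<le> (real n - real k) * \<tau>"
  proof -
    have "(real l - 1) * (\<beta> * lam) \<le> (real l - 1) * ((1 - \<beta>) * \<tau>)"
      using key rl1 by (intro mult_left_mono) auto
    moreover have "(real l - 1) * (\<beta> * lam) = (real m - 1) * lam" unfolding \<beta>_def using rl1 by simp
    moreover have "(real l - 1) * ((1 - \<beta>) * \<tau>) = (real l - real m) * \<tau>" unfolding \<beta>_def using rl1
      by (simp add: field_simps)
    moreover have "real l - real m = real n - real k" using lm ml kn by (metis of_nat_diff)
    ultimately show ?thesis by simp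
  qed
  have m48: "real n / 48 \<le> real m - 1" using rm hb2 kb n97 by linarith
  have "lam * (real n / 48) \<le> lam * (real m - 1)" using m48 lp by (intro mult_left_mono) auto
  also have "\<dots> \<le> (real n - real k) * \<tau>" using key2 by (simp add: mult.commute)
  finally have "lam * (real n / 48) \<le> (real n - real k) * \<tau>" .
  then have f1: "lam * real n \<le> 48 * (real n - real k) * \<tau>" by (simp add: algebra_simps)
  have pw: "real n powr (3/2) = real n * sqrt (real n)"
  proof -
    have "real n powr (3/2) = real n powr (1 + 1/2)" by simp
    also have "\<dots> = real n powr 1 * real n powr (1/2)" using n97 by (subst powr_add) auto
    also have "\<dots> = real n * sqrt (real n)" using n97 by (simp add: powr_half_sqrt)
    finally show ?thesis .
  qed
  have np: "0 < real n" using n97 by simp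
  have "lam * (real n * sqrt (real n)) \<le> 96 * (real n - real k)"
  proof -
    have "lam * (real n * sqrt (real n)) = (lam * real n) * sqrt (real n)" by simp
    also have "\<dots> \<le> (48 * (real n - real k) * \<tau>) * sqrt (real n)" using f1 sn by (intro mult_right_mono) auto
    also have "\<dots> = 96 * (real n - real k)" unfolding \<tau>_def using sn by simp
    finally show ?thesis .
  qed
  then show ?thesis unfolding pw using np sn by (simp add: field_simps)
qed


theorem lemma4:
  fixes n k :: nat and M :: "real mat" and lam1 :: real
  assumes "n \<ge> 97" and "3 * real n / 4 \<le> real k" and "k \<le> n"
    and "M \<in> k_psd_closure n k"
    and "frobenius_norm M = 1"
    and "\<not> psd_mat M"
    and "eigenvalue M (- lam1)"
    and "\<forall>\<mu>. eigenvalue M \<mu> \<longrightarrow> - lam1 \<le> \<mu>"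
    and "lam1 > 0"
  shows "lam1 \<le> 96 * (real n - real k) / real n powr (3 / 2)"
proof -
  have Mc: "M \<in> carrier_mat n n" and Mt: "transpose_mat M = M"
    and Mp: "\<And>S. S \<subseteq> {0..<n} \<Longrightarrow> card S = k \<Longrightarrow> psd_mat (submatrix M S S)"
    using assms(4) unfolding k_psd_closure_def by auto
  have dr: "dim_row M = n" and dc: "dim_col M = n" using Mc by auto
  obtain v where ev: "eigenvector M v (- lam1)" using assms(7) unfolding eigenvalue_def by blast
  have vc: "v \<in> carrier_vec n" and vnz: "v \<noteq> 0\<^sub>v n" and Mv: "M *\<^sub>v v = (- lam1) \<cdot>\<^sub>v v"
    using ev dr unfolding eigenvector_def by auto
  have dv: "dim_vec v = n" using vc by simp
  define f where "f = (\<lambda>i j. M $$ (i, j))"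
  define u where "u = (\<lambda>i. v $ i)"
  have sym: "\<And>i j. i < n \<Longrightarrow> j < n \<Longrightarrow> f i j = f j i"
  proof -
    fix i j assume i: "i < n" and j: "j < n"
    have "M $$ (i, j) = transpose_mat M $$ (i, j)" using Mt by simp
    also have "\<dots> = M $$ (j, i)" using i j dr dc by simp
    finally show "f i j = f j i" unfolding f_def .
  qed
  have eig: "\<And>i. i < n \<Longrightarrow> (\<Sum>j<n. f i j * u j) = - lam1 * u i"
  proof -
    fix i assume i: "i < n"
    have "(M *\<^sub>v v) $ i = row M i \<bullet> v" using i dr by simp
    also have "\<dots> = (\<Sum>j\<in>{0..<n}. row M i $ j * v $ j)" unfolding scalar_prod_def dv by simp
    also have "\<dots> = (\<Sum>j<n. f i j * u j)"
      by (rule sum.cong) (use i dr dc in \<open>auto simp: f_def u_def\<close>)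
    finally have "(M *\<^sub>v v) $ i = (\<Sum>j<n. f i j * u j)" .
    moreover have "(M *\<^sub>v v) $ i = - lam1 * u i" unfolding Mv u_def using i dv by simp
    ultimately show "(\<Sum>j<n. f i j * u j) = - lam1 * u i" by simp
  qed
  have nz: "0 < (\<Sum>i<n. (u i)^2)"
  proof -
    obtain i where i: "i < n" "v $ i \<noteq> 0"
    proof (rule ccontr)
      assume "\<not> thesis"
      then have "\<And>i. i < n \<Longrightarrow> v $ i = 0" using that by blast
      then have "v = 0\<^sub>v n" using dv by (intro eq_vecI) auto
      then show False using vnz by simp
    qed
    have "0 < (u i)^2" using i u_def by simp
    also have "\<dots> \<le> (\<Sum>i<n. (u i)^2)" using i by (intro member_le_sum) auto
    finally show ?thesis .
  qed
  have psd: "\<And>S w. S \<subseteq> {..<n} \<Longrightarrow> card S = k \<Longrightarrow> 0 \<le> (\<Sum>i\<in>S. \<Sum>j\<in>S. w i * f i j * w j)"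
  proof -
    fix S w assume S: "S \<subseteq> {..<n}" and cS: "card S = k"
    have "psd_mat (submatrix M S S)" using S cS by (intro Mp) auto
    then show "0 \<le> (\<Sum>i\<in>S. \<Sum>j\<in>S. w i * f i j * w j)"
      unfolding f_def using quad_sub[OF Mc S] by blast
  qed
  have frob: "(\<Sum>i<n. (f i i)^2) \<le> 1"
  proof -
    have "sqrt (\<Sum>i<n. \<Sum>j<n. (M $$ (i, j))\<^sup>2) = 1" using assms(5) unfolding frobenius_norm_def dr dc .
    then have s1: "(\<Sum>i<n. \<Sum>j<n. (M $$ (i, j))\<^sup>2) = 1" by simp
    have "(\<Sum>i<n. (f i i)^2) \<le> (\<Sum>i<n. \<Sum>j<n. (M $$ (i, j))\<^sup>2)"
    proof (rule sum_mono)
      fix i assume "i \<in> {..<n}"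
      then show "(f i i)^2 \<le> (\<Sum>j<n. (M $$ (i, j))\<^sup>2)" unfolding f_def
        by (intro member_le_sum[where f="\<lambda>j. (M $$ (i, j))\<^sup>2"]) auto
    qed
    then show ?thesis using s1 by simp
  qed
  show ?thesis
    by (rule core[OF sym eig nz psd frob assms(1) assms(2) assms(3) assms(9)]) auto
qed

end
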